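(* Let $H:[0,1)\to(0,\infty)$ be any function and for $D=(\mu,\mathcal{A},\mathcal{B},\mathcal{F})\in\mathcal{BV}(\Omega)$ set $\Theta^{(H)}_D:=|\mathcal{B}|^2H(|\mu|^2)\,dx\,dy$. Then the following are equivalent: (a) $\Theta^{(H)}$ is gauge-invariant and diffeomorphism-covariant, i.e. $\Theta^{(H)}_{\phi\cdot D}=\Theta^{(H)}_D$ for every domain $\Omega$, every $D\in\mathcal{BV}(\Omega)$ and every gauge $\phi$ on $\Omega$, and $\Theta^{(H)}_{\Phi^*D}=\Phi^*\Theta^{(H)}_D$ for every diffeomorphism $\Phi:\Omega_1\to\Omega_2$ between domains and every $D\in\mathcal{BV}(\Omega_2)$; (b) there is a constant $C>0$ with $H(s)=\frac{C}{1-s}$ for all $s\in[0,1)$.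
   Context: A domain is an open connected subset of $\mathbb{C}$, $z=x+iy$. $\mathcal{BV}(\Omega)$ is the set of quadruples $(\mu,\mathcal{A},\mathcal{B},\mathcal{F})$ of continuous complex functions on $\Omega$ with $|\mu|<1$ pointwise. Gauge action: for a $C^1$ nowhere-vanishing $\phi$ on $\Omega$, $\phi\cdot(\mu,\mathcal{A},\mathcal{B},\mathcal{F})=(\mu,\ \mathcal{A}-\phi_{\bar z}/\phi+\mu\phi_z/\phi,\ \mathcal{B}\phi/\bar\phi,\ \phi\mathcal{F})$. Diffeomorphism: $C^1$ bijection $\Phi:\Omega_1\to\Omega_2$ with $C^1$ inverse and $J=|\Phi_z|^2-|\Phi_{\bar z}|^2>0$; for $D\in\mathcal{BV}(\Omega_2)$, with $K=\Phi_z+(\mu\circ\Phi)\overline{\Phi_{\bar z}}$, $\Phi^*D=((\Phi_{\bar z}+(\mu\circ\Phi)\overline{\Phi_z})/K,\ J(\mathcal{A}\circ\Phi)/K,\ J(\mathcal{B}\circ\Phi)/K,\ J(\mathcal{F}\circ\Phi)/K)$. The pullback of a 2-form is $\Phi^*(f\,dx\,dy)=(f\circ\Phi)J\,dx\,dy$. *)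

theory Defs
  imports "HOL-Analysis.Analysis"
begin

definition is_domain :: "complex set \<Rightarrow> bool" where
  "is_domain \<Omega> \<longleftrightarrow> open \<Omega> \<and> connected \<Omega>"

definition wirt_z :: "(complex \<Rightarrow> complex) \<Rightarrow> complex \<Rightarrow> complex" where
  "wirt_z f z = (frechet_derivative f (at z) 1 - \<i> * frechet_derivative f (at z) \<i>) / 2"

definition wirt_zbar :: "(complex \<Rightarrow> complex) \<Rightarrow> complex \<Rightarrow> complex" where
  "wirt_zbar f z = (frechet_derivative f (at z) 1 + \<i> * frechet_derivative f (at z) \<i>) / 2"

definition C1_on :: "complex set \<Rightarrow> (complex \<Rightarrow> complex) \<Rightarrow> bool" where
  "C1_on \<Omega> f \<longleftrightarrow> (\<forall>z\<in>\<Omega>. f differentiable (at z))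
     \<and> continuous_on \<Omega> (wirt_z f) \<and> continuous_on \<Omega> (wirt_zbar f)"

type_synonym bvdata =
  "(complex \<Rightarrow> complex) \<times> (complex \<Rightarrow> complex) \<times> (complex \<Rightarrow> complex) \<times> (complex \<Rightarrow> complex)"

definition BV :: "complex set \<Rightarrow> bvdata set" where
  "BV \<Omega> = {(\<mu>, A, B, F). continuous_on \<Omega> \<mu> \<and> continuous_on \<Omega> A \<and> continuous_on \<Omega> B
      \<and> continuous_on \<Omega> F \<and> (\<forall>z\<in>\<Omega>. norm (\<mu> z) < 1)}"

definition is_gauge :: "complex set \<Rightarrow> (complex \<Rightarrow> complex) \<Rightarrow> bool" where
  "is_gauge \<Omega> \<phi> \<longleftrightarrow> C1_on \<Omega> \<phi> \<and> (\<forall>z\<in>\<Omega>. \<phi> z \<noteq> 0)"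

definition gauge_act :: "(complex \<Rightarrow> complex) \<Rightarrow> bvdata \<Rightarrow> bvdata" where
  "gauge_act \<phi> D = (case D of (\<mu>, A, B, F) \<Rightarrow>
     (\<mu>,
      \<lambda>z. A z - wirt_zbar \<phi> z / \<phi> z + \<mu> z * wirt_z \<phi> z / \<phi> z,
      \<lambda>z. B z * \<phi> z / cnj (\<phi> z),
      \<lambda>z. \<phi> z * F z))"

definition jac :: "(complex \<Rightarrow> complex) \<Rightarrow> complex \<Rightarrow> real" where
  "jac \<Phi> z = (norm (wirt_z \<Phi> z))\<^sup>2 - (norm (wirt_zbar \<Phi> z))\<^sup>2"

definition is_diffeo :: "complex set \<Rightarrow> complex set \<Rightarrow> (complex \<Rightarrow> complex) \<Rightarrow> bool" where
  "is_diffeo \<Omega>1 \<Omega>2 \<Phi> \<longleftrightarrow> bij_betw \<Phi> \<Omega>1 \<Omega>2 \<and> C1_on \<Omega>1 \<Phi>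
     \<and> C1_on \<Omega>2 (inv_into \<Omega>1 \<Phi>) \<and> (\<forall>z\<in>\<Omega>1. jac \<Phi> z > 0)"

definition pullback :: "(complex \<Rightarrow> complex) \<Rightarrow> bvdata \<Rightarrow> bvdata" where
  "pullback \<Phi> D = (case D of (\<mu>, A, B, F) \<Rightarrow>
     (let K = (\<lambda>z. wirt_z \<Phi> z + \<mu> (\<Phi> z) * cnj (wirt_zbar \<Phi> z)) in
     (\<lambda>z. (wirt_zbar \<Phi> z + \<mu> (\<Phi> z) * cnj (wirt_z \<Phi> z)) / K z,
      \<lambda>z. of_real (jac \<Phi> z) * A (\<Phi> z) / K z,
      \<lambda>z. of_real (jac \<Phi> z) * B (\<Phi> z) / K z,
      \<lambda>z. of_real (jac \<Phi> z) * F (\<Phi> z) / K z)))"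

text \<open>A 2-form f dx dy is represented by its density f; pullback of 2-forms.\<close>
definition pullback2 :: "(complex \<Rightarrow> complex) \<Rightarrow> (complex \<Rightarrow> real) \<Rightarrow> complex \<Rightarrow> real" where
  "pullback2 \<Phi> f = (\<lambda>z. f (\<Phi> z) * jac \<Phi> z)"

definition Theta :: "(real \<Rightarrow> real) \<Rightarrow> bvdata \<Rightarrow> complex \<Rightarrow> real" where
  "Theta H D = (case D of (\<mu>, A, B, F) \<Rightarrow> (\<lambda>z. (norm (B z))\<^sup>2 * H ((norm (\<mu> z))\<^sup>2)))"

end

theory Submission
  imports Defs
begin

lemma lin_deriv:
  fixes a b :: complex
  shows "((\<lambda>z. a*z + b*cnj z) has_derivative (\<lambda>h. a*h + b*cnj h)) (at z)"
  by (auto intro!: derivative_eq_intros)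

lemma lin_wirt:
  fixes a b :: complex
  shows "wirt_z (\<lambda>z. a*z + b*cnj z) z = a" "wirt_zbar (\<lambda>z. a*z + b*cnj z) z = b"
proof -
  have f: "frechet_derivative (\<lambda>z. a*z + b*cnj z) (at z) = (\<lambda>h. a*h + b*cnj h)"
    using frechet_derivative_at[OF lin_deriv] by metis
  show "wirt_z (\<lambda>z. a*z + b*cnj z) z = a" unfolding wirt_z_def f
    by (simp add: algebra_simps)
  show "wirt_zbar (\<lambda>z. a*z + b*cnj z) z = b" unfolding wirt_zbar_def f
    by (simp add: algebra_simps)
qed

lemma lin_C1:
  fixes a b :: complex
  shows "C1_on S (\<lambda>z. a*z + b*cnj z)"
  unfolding C1_on_def lin_wirt
  using lin_deriv by (auto simp: differentiable_def)

lemma normsq_expand: "(cmod z)\<^sup>2 = (Re z)\<^sup>2 + (Im z)\<^sup>2"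
  by (simp add: cmod_power2)

lemma key:
  fixes a b m :: complex
  assumes m: "cmod m < 1" and J: "(cmod a)\<^sup>2 - (cmod b)\<^sup>2 > 0"
  shows "a + m * cnj b \<noteq> 0"
    "(cmod (a + m * cnj b))\<^sup>2 - (cmod (b + m * cnj a))\<^sup>2
       = ((cmod a)\<^sup>2 - (cmod b)\<^sup>2) * (1 - (cmod m)\<^sup>2)"
proof -
  show eq: "(cmod (a + m * cnj b))\<^sup>2 - (cmod (b + m * cnj a))\<^sup>2
       = ((cmod a)\<^sup>2 - (cmod b)\<^sup>2) * (1 - (cmod m)\<^sup>2)"
    unfolding normsq_expand by (simp add: algebra_simps power2_eq_square)
  have "(cmod m)\<^sup>2 < 1" using m by (simp add: abs_square_less_1)
  hence "((cmod a)\<^sup>2 - (cmod b)\<^sup>2) * (1 - (cmod m)\<^sup>2) > 0" using J by simp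
  hence "(cmod (a + m * cnj b))\<^sup>2 > 0" using eq
    by (smt (verit) zero_le_power2)
  thus "a + m * cnj b \<noteq> 0" by auto
qed

theorem proposition8p3:
  fixes H :: "real \<Rightarrow> real"
  assumes Hpos: "\<forall>s\<in>{0..<1}. H s > 0"
  shows "((\<forall>\<Omega> D \<phi>. is_domain \<Omega> \<and> D \<in> BV \<Omega> \<and> is_gauge \<Omega> \<phi> \<longrightarrow>
              (\<forall>z\<in>\<Omega>. Theta H (gauge_act \<phi> D) z = Theta H D z))
          \<and> (\<forall>\<Omega>1 \<Omega>2 \<Phi> D. is_domain \<Omega>1 \<and> is_domain \<Omega>2 \<and> is_diffeo \<Omega>1 \<Omega>2 \<Phi> \<and> D \<in> BV \<Omega>2 \<longrightarrow>
              (\<forall>z\<in>\<Omega>1. Theta H (pullback \<Phi> D) z = pullback2 \<Phi> (Theta H D) z)))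
         \<longleftrightarrow> (\<exists>C>0. \<forall>s\<in>{0..<1}. H s = C / (1 - s))"
proof
  assume A: "(\<forall>\<Omega> D \<phi>. is_domain \<Omega> \<and> D \<in> BV \<Omega> \<and> is_gauge \<Omega> \<phi> \<longrightarrow>
              (\<forall>z\<in>\<Omega>. Theta H (gauge_act \<phi> D) z = Theta H D z))
          \<and> (\<forall>\<Omega>1 \<Omega>2 \<Phi> D. is_domain \<Omega>1 \<and> is_domain \<Omega>2 \<and> is_diffeo \<Omega>1 \<Omega>2 \<Phi> \<and> D \<in> BV \<Omega>2 \<longrightarrow>
              (\<forall>z\<in>\<Omega>1. Theta H (pullback \<Phi> D) z = pullback2 \<Phi> (Theta H D) z))"
  show "\<exists>C>0. \<forall>s\<in>{0..<1}. H s = C / (1 - s)"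
  proof (intro exI[of _ "H 0"] conjI ballI)
    show "H 0 > 0" using Hpos by auto
    fix s :: real assume s: "s \<in> {0..<1}"
    define r where "r = sqrt s"
    have r2: "r\<^sup>2 = s" using s by (simp add: r_def)
    have r2': "r * r = s" using r2 by (simp add: power2_eq_square)
    have s1: "1 - s \<noteq> 0" using s by auto
    define \<Phi> where "\<Phi> = (\<lambda>z. (1::complex)*z + of_real r*cnj z)"
    define g where "g = (\<lambda>z. complex_of_real (1/(1-s))*z + of_real (-r/(1-s))*cnj z)"
    have rr: "1 - r*r \<noteq> 0" using s1 r2' by simp
    have fg: "\<Phi> (g w) = w" for w
      unfolding \<Phi>_def g_def r2'[symmetric] using rr
      by (simp add: complex_eq_iff divide_simps) (simp add: algebra_simps)
    have gf: "g (\<Phi> w) = w" for w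
      unfolding \<Phi>_def g_def r2'[symmetric] using rr
      by (simp add: complex_eq_iff divide_simps) (simp add: algebra_simps)
    have inj: "inj \<Phi>" by (metis gf injI)
    have bij: "bij \<Phi>" using fg gf by (metis bij_betw_byWitness subset_UNIV)
    have invg: "inv_into UNIV \<Phi> = g"
      by (rule ext, rule inv_into_f_eq[OF inj]) (auto simp: fg)
    have wz: "wirt_z \<Phi> z = 1" "wirt_zbar \<Phi> z = of_real r" for z
      unfolding \<Phi>_def lin_wirt by auto
    have jac: "jac \<Phi> z = 1 - s" for z
      unfolding jac_def wz using r2 by simp
    have dif: "is_diffeo UNIV UNIV \<Phi>"
      unfolding is_diffeo_def invg jac using bij s
      unfolding \<Phi>_def g_def by (simp only: lin_C1) auto
    have dom: "is_domain UNIV" by (simp add: is_domain_def connected_UNIV)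
    define D :: bvdata where "D = (\<lambda>_. 0, \<lambda>_. 0, \<lambda>_. 1, \<lambda>_. 0)"
    have DBV: "D \<in> BV UNIV" by (simp add: D_def BV_def)
    have "Theta H (pullback \<Phi> D) 0 = pullback2 \<Phi> (Theta H D) 0"
      using A dom dif DBV by blast
    hence "(1-s)\<^sup>2 * H s = H 0 * (1 - s)"
      by (simp add: Theta_def pullback_def pullback2_def D_def Let_def wz jac r2
          norm_mult del: of_real_diff)
    hence "(1-s) * H s = H 0" using s1 by (simp add: power2_eq_square)
    thus "H s = H 0 / (1 - s)" using s1 by (simp add: field_simps)
  qed
next
  assume "\<exists>C>0. \<forall>s\<in>{0..<1}. H s = C / (1 - s)"
  then obtain C where C: "C > 0" "\<And>s. s \<in> {0..<1} \<Longrightarrow> H s = C / (1 - s)" by auto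
  have gauge: "\<forall>z\<in>\<Omega>. Theta H (gauge_act \<phi> D) z = Theta H D z"
    if "is_gauge \<Omega> \<phi>" for \<Omega> D \<phi>
  proof
    fix z assume z: "z \<in> \<Omega>"
    have "\<phi> z \<noteq> 0" using that z by (auto simp: is_gauge_def)
    then show "Theta H (gauge_act \<phi> D) z = Theta H D z"
      by (cases D) (auto simp: Theta_def gauge_act_def norm_mult norm_divide)
  qed
  have diffeo: "\<forall>z\<in>\<Omega>1. Theta H (pullback \<Phi> D) z = pullback2 \<Phi> (Theta H D) z"
    if "is_diffeo \<Omega>1 \<Omega>2 \<Phi>" "D \<in> BV \<Omega>2" for \<Omega>1 \<Omega>2 \<Phi> D
  proof
    fix z assume z: "z \<in> \<Omega>1"
    obtain \<mu> A B F where D: "D = (\<mu>, A, B, F)" by (cases D) auto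
    define a where "a = wirt_z \<Phi> z"
    define b where "b = wirt_zbar \<Phi> z"
    define m where "m = \<mu> (\<Phi> z)"
    define J where "J = jac \<Phi> z"
    define K where "K = a + m * cnj b"
    define N where "N = b + m * cnj a"
    have Jd: "J = (cmod a)\<^sup>2 - (cmod b)\<^sup>2" by (simp add: J_def jac_def a_def b_def)
    have Jpos: "J > 0" using that z by (auto simp: is_diffeo_def J_def)
    have "\<Phi> z \<in> \<Omega>2" using that z by (auto simp: is_diffeo_def bij_betw_def)
    hence m1: "cmod m < 1" using that D by (auto simp: BV_def m_def)
    have K0: "K \<noteq> 0" and KN: "(cmod K)\<^sup>2 - (cmod N)\<^sup>2 = J * (1 - (cmod m)\<^sup>2)"
      using key[OF m1, of a b] Jpos Jd by (auto simp: K_def N_def)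
    have m2: "(cmod m)\<^sup>2 < 1" using m1 by (simp add: abs_square_less_1)
    have Kp: "(cmod K)\<^sup>2 > 0" using K0 by simp
    have q: "(cmod (N / K))\<^sup>2 = (cmod N)\<^sup>2 / (cmod K)\<^sup>2"
      by (simp add: norm_divide power_divide)
    have q1: "1 - (cmod (N / K))\<^sup>2 = J * (1 - (cmod m)\<^sup>2) / (cmod K)\<^sup>2"
      unfolding q using Kp KN by (simp add: field_simps)
    have q1pos: "1 - (cmod (N / K))\<^sup>2 > 0" unfolding q1 using Jpos m2 Kp by simp
    have HN: "H ((cmod (N / K))\<^sup>2) = C * (cmod K)\<^sup>2 / (J * (1 - (cmod m)\<^sup>2))"
      using C(2)[of "(cmod (N / K))\<^sup>2"] q1pos q1 by simp
    have Hm: "H ((cmod m)\<^sup>2) = C / (1 - (cmod m)\<^sup>2)"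
      using C(2)[of "(cmod m)\<^sup>2"] m2 by simp
    have lhs: "Theta H (pullback \<Phi> D) z
        = (cmod (complex_of_real J * B (\<Phi> z) / K))\<^sup>2 * H ((cmod (N / K))\<^sup>2)"
      by (simp add: Theta_def pullback_def D Let_def a_def b_def m_def J_def K_def N_def)
    have rhs: "pullback2 \<Phi> (Theta H D) z = (cmod (B (\<Phi> z)))\<^sup>2 * H ((cmod m)\<^sup>2) * J"
      by (simp add: Theta_def pullback2_def D m_def J_def)
    show "Theta H (pullback \<Phi> D) z = pullback2 \<Phi> (Theta H D) z"
    proof -
      have d1: "1 - (cmod m)\<^sup>2 \<noteq> 0" using m2 by simp
      have d2: "cmod K \<noteq> 0" using K0 by simp
      have d3: "J \<noteq> 0" using Jpos by simp
      show ?thesis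
        unfolding lhs rhs HN Hm using d1 d2 d3 Jpos
        by (simp add: norm_mult norm_divide power_divide power_mult_distrib)
          (simp add: field_simps power2_eq_square)
    qed
  qed
  show "(\<forall>\<Omega> D \<phi>. is_domain \<Omega> \<and> D \<in> BV \<Omega> \<and> is_gauge \<Omega> \<phi> \<longrightarrow>
              (\<forall>z\<in>\<Omega>. Theta H (gauge_act \<phi> D) z = Theta H D z))
          \<and> (\<forall>\<Omega>1 \<Omega>2 \<Phi> D. is_domain \<Omega>1 \<and> is_domain \<Omega>2 \<and> is_diffeo \<Omega>1 \<Omega>2 \<Phi> \<and> D \<in> BV \<Omega>2 \<longrightarrow>
              (\<forall>z\<in>\<Omega>1. Theta H (pullback \<Phi> D) z = pullback2 \<Phi> (Theta H D) z))"
    using gauge diffeo by blast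
qed

end
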